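(* Let $q=3^r>3$, and let $$\bar f_2(x_1,x_2)=t\bigl(x_1^{q-4}+x_2^{q-2}\bigr).$$ Then the polynomial $t\bigl(\bar f_2(x_1,x_2)+x_3^{q-2}\bigr)\in\mathbb{F}_q[x_1,x_2,x_3]$, reduced modulo $x_j^q-x_j$, has degree $3(q-2)$.
   Context: $\mathbb{F}_q$ is the finite field with $q$ elements, and $$t(x)=x+\sum_{k=0}^{q-2}x^k\in\mathbb{F}_q[x];$$ this polynomial swaps $0$ and $1$ and fixes every other element. Degree means the total degree of the reduced representative (degree $<q$ in each variable). *)

theory Defs
  imports Main "HOL-Library.Cardinality"
begin

text \<open>The polynomial t(x) = x + sum_{k=0}^{q-2} x^k over the finite field with q = CARD('a)
  elements, viewed via its evaluation map (0^0 = 1).\<close>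
definition tpoly :: "'a::{finite,field} \<Rightarrow> 'a" where
  "tpoly x = x + (\<Sum>k \<in> {0 .. CARD('a) - 2}. x ^ k)"

text \<open>c is the coefficient array of a reduced polynomial in F_q[x1,x2,x3]
  (degree < q in each variable) whose evaluation map is f.\<close>
definition is_reduced_rep ::
  "(nat \<Rightarrow> nat \<Rightarrow> nat \<Rightarrow> 'a::{finite,field}) \<Rightarrow> ('a \<Rightarrow> 'a \<Rightarrow> 'a \<Rightarrow> 'a) \<Rightarrow> bool" where
  "is_reduced_rep c f \<longleftrightarrow>
     (\<forall>i j k. c i j k \<noteq> 0 \<longrightarrow> i < CARD('a) \<and> j < CARD('a) \<and> k < CARD('a)) \<and>
     (\<forall>x y z. f x y z =
        (\<Sum>i<CARD('a). \<Sum>j<CARD('a). \<Sum>k<CARD('a). c i j k * x ^ i * y ^ j * z ^ k))"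

definition reduced_coeffs ::
  "('a::{finite,field} \<Rightarrow> 'a \<Rightarrow> 'a \<Rightarrow> 'a) \<Rightarrow> nat \<Rightarrow> nat \<Rightarrow> nat \<Rightarrow> 'a" where
  "reduced_coeffs f = (THE c. is_reduced_rep c f)"

definition reduced_degree :: "('a::{finite,field} \<Rightarrow> 'a \<Rightarrow> 'a \<Rightarrow> 'a) \<Rightarrow> nat" where
  "reduced_degree f = Max {i + j + k | i j k. reduced_coeffs f i j k \<noteq> 0}"

end

theory Submission
  imports Defs "HOL-Computational_Algebra.Polynomial"
begin


lemma reidx:
  fixes i j :: "'a \<Rightarrow> 'a"
  assumes "\<And>x. j (i x) = x" "\<And>y. i (j y) = y"
  shows "(\<Sum>x\<in>UNIV. g (i x)) = (\<Sum>x\<in>UNIV. g x)"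
  by (rule sum.reindex_bij_witness[where i=j and j=i]) (auto simp: assms)

lemma card_zero: "of_nat CARD('a::{finite,field}) = (0::'a)"
proof -
  have "(\<Sum>x\<in>UNIV. (x::'a) + 1) = (\<Sum>x\<in>UNIV. x)"
    by (rule reidx[where j="\<lambda>x. x - 1"]) auto
  then show ?thesis by (simp add: sum.distrib)
qed

lemma fermat:
  fixes a :: "'a::{finite,field}"
  assumes "a \<noteq> 0" shows "a ^ (CARD('a) - 1) = 1"
proof -
  let ?A = "UNIV - {0::'a}"
  have "(\<Prod>x\<in>?A. a * x) = (\<Prod>x\<in>?A. x)"
    by (rule prod.reindex_bij_witness[where i="\<lambda>x. x / a" and j="\<lambda>x. a * x"]) (use assms in auto)
  moreover have "(\<Prod>x\<in>?A. a * x) = a ^ card ?A * (\<Prod>x\<in>?A. x)"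
    by (simp add: prod.distrib)
  moreover have "card ?A = CARD('a) - 1" by (simp add: card_Diff_singleton)
  moreover have "(\<Prod>x\<in>?A. x) \<noteq> 0" by simp
  ultimately show ?thesis by simp
qed

lemma card_ge2: "CARD('a::{finite,field}) \<ge> 2"
proof -
  have "{0::'a, 1} \<subseteq> UNIV" by simp
  then have "card {0::'a,1} \<le> CARD('a)" by (intro card_mono) auto
  then show ?thesis by simp
qed

lemma pow_nonzero_not1:
  fixes dummy :: "'a::{finite,field}"
  assumes "0 < m" "m < CARD('a) - 1"
  shows "\<exists>a::'a. a \<noteq> 0 \<and> a ^ m \<noteq> 1"
proof (rule ccontr)
  assume "\<not> ?thesis"
  then have H: "\<And>a::'a. a \<noteq> 0 \<Longrightarrow> a ^ m = 1" by blast
  let ?p = "monom (1::'a) m - 1"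
  have deg: "degree ?p \<le> m" by (intro degree_diff_le) (auto simp: degree_monom_le)
  have "poly ?p 0 \<noteq> 0" using assms by (simp add: poly_monom power_0_left)
  then have "?p \<noteq> 0" by auto
  then have "card {x. poly ?p x = 0} \<le> m" using card_poly_roots_bound deg le_trans by metis
  moreover have "UNIV - {0::'a} \<subseteq> {x. poly ?p x = 0}" using H by (auto simp: poly_monom)
  then have "card (UNIV - {0::'a}) \<le> card {x. poly ?p x = 0}" by (intro card_mono) auto
  ultimately show False using assms by (simp add: card_Diff_singleton)
qed

definition PS :: "nat \<Rightarrow> 'a::{finite,field}" where "PS m = (\<Sum>x\<in>UNIV. x ^ m)"

lemma PS_small:
  assumes "m < CARD('a::{finite,field}) - 1"
  shows "(PS m :: 'a) = 0"
proof (cases "m = 0")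
  case True then show ?thesis using card_zero by (simp add: PS_def)
next
  case False
  then obtain a :: 'a where a: "a \<noteq> 0" "a ^ m \<noteq> 1" using pow_nonzero_not1 assms by blast
  have "(\<Sum>x\<in>UNIV. (a * x) ^ m) = (\<Sum>x\<in>UNIV. x ^ m)"
    by (rule reidx[where j="\<lambda>x. x / a"]) (use a in auto)
  then have "a ^ m * PS m = PS m" by (simp add: PS_def power_mult_distrib sum_distrib_left)
  then have "(a ^ m - 1) * PS m = 0" by (simp add: algebra_simps)
  then show ?thesis using a by simp
qed

lemma PS_qm1: "(PS (CARD('a::{finite,field}) - 1) :: 'a) = -1"
proof -
  have "(\<Sum>x\<in>UNIV. (x::'a) ^ (CARD('a) - 1)) = (\<Sum>x\<in>UNIV. if x = (0::'a) then 0 else 1)"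
  proof -
    have "\<And>x::'a. x^(CARD('a) - 1) = (if x=0 then 0 else 1)"
      using card_ge2[where 'a='a] fermat[where 'a='a] by (auto simp: power_0_left)
    then show ?thesis by simp
  qed
  also have "\<dots> = of_nat (CARD('a) - 1)"
    proof -
    have "(\<Sum>x\<in>UNIV. if x = (0::'a) then 0 else 1) = (\<Sum>x\<in>UNIV - {0::'a}. (1::'a))"
      by (rule sum.mono_neutral_cong_right) auto
    then show ?thesis by (simp add: card_Diff_singleton)
  qed
  also have "\<dots> = -1" using card_zero[where 'a='a] card_ge2[where 'a='a]
    by (simp add: of_nat_diff)
  finally show ?thesis by (simp add: PS_def)
qed

lemma PS_shift:
  assumes "m \<ge> CARD('a::{finite,field})"
  shows "(PS m :: 'a) = PS (m - (CARD('a) - 1))"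
proof -
  have "(x::'a) ^ m = x ^ (m - (CARD('a) - 1))" for x
  proof (cases "x = 0")
    case True then show ?thesis using assms card_ge2[where 'a='a] by (simp add: power_0_left)
  next
    case False
    have "x ^ m = x ^ (m - (CARD('a) - 1)) * x ^ (CARD('a) - 1)"
      using assms by (simp flip: power_add)
    then show ?thesis using fermat[OF False] by simp
  qed
  then show ?thesis by (simp add: PS_def)
qed

lemma PS_formula:
  "(PS m :: 'a::{finite,field}) = (if 0 < m \<and> (CARD('a) - 1) dvd m then -1 else 0)"
proof (induction m rule: less_induct)
  case (less m)
  have c2: "CARD('a) \<ge> 2" by (rule card_ge2)
  show ?case
  proof (cases "m < CARD('a) - 1")
    case True
    then show ?thesis using PS_small[OF True] by (auto dest: dvd_imp_le)
  next
    case False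
    show ?thesis
    proof (cases "m = CARD('a) - 1")
      case True then show ?thesis using PS_qm1 c2 by simp
    next
      case F2: False
      then have ge: "m \<ge> CARD('a)" using False by simp
      have "PS m = (PS (m - (CARD('a) - 1)) :: 'a)" by (rule PS_shift[OF ge])
      also have "\<dots> = (if 0 < m - (CARD('a) - 1) \<and> (CARD('a) - 1) dvd (m - (CARD('a) - 1)) then -1 else 0)"
        using c2 ge by (intro less) auto
      also have "\<dots> = (if 0 < m \<and> (CARD('a) - 1) dvd m then -1 else 0)"
      proof -
        define n where "n = CARD('a) - 1"
        have kk: "m = (m - n) + n" "0 < m - n" using ge c2 by (auto simp: n_def)
        have dv: "n dvd m \<longleftrightarrow> n dvd (m - n)" by (subst kk(1)) (simp only: dvd_add_left_iff[OF dvd_refl])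
        show ?thesis by (simp only: n_def[symmetric]) (use kk dv in auto)
      qed
      finally show ?thesis .
    qed
  qed
qed



lemma sw2: "(\<Sum>x\<in>X. \<Sum>y\<in>Y. \<Sum>a\<in>A. G x y a) = (\<Sum>a\<in>A. \<Sum>x\<in>X. \<Sum>y\<in>Y. G x y a)"
proof -
  have "(\<Sum>x\<in>X. \<Sum>y\<in>Y. \<Sum>a\<in>A. G x y a) = (\<Sum>x\<in>X. \<Sum>a\<in>A. \<Sum>y\<in>Y. G x y a)"
    by (rule sum.cong[OF refl], rule sum.swap)
  also have "\<dots> = (\<Sum>a\<in>A. \<Sum>x\<in>X. \<Sum>y\<in>Y. G x y a)" by (rule sum.swap)
  finally show ?thesis .
qed

lemma sw3: "(\<Sum>x\<in>X. \<Sum>y\<in>Y. \<Sum>z\<in>Z. \<Sum>a\<in>A. G x y z a) = (\<Sum>a\<in>A. \<Sum>x\<in>X. \<Sum>y\<in>Y. \<Sum>z\<in>Z. G x y z a)"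
proof -
  have "(\<Sum>x\<in>X. \<Sum>y\<in>Y. \<Sum>z\<in>Z. \<Sum>a\<in>A. G x y z a) = (\<Sum>x\<in>X. \<Sum>a\<in>A. \<Sum>y\<in>Y. \<Sum>z\<in>Z. G x y z a)"
    by (rule sum.cong[OF refl], rule sw2)
  also have "\<dots> = (\<Sum>a\<in>A. \<Sum>x\<in>X. \<Sum>y\<in>Y. \<Sum>z\<in>Z. G x y z a)" by (rule sum.swap)
  finally show ?thesis .
qed

lemma GS:
  fixes F :: "'i \<Rightarrow> 'j \<Rightarrow> 'k \<Rightarrow> 'r::comm_semiring_1"
  shows "(\<Sum>x\<in>X. \<Sum>y\<in>Y. \<Sum>z\<in>Z. (\<Sum>a\<in>A. \<Sum>b\<in>B. \<Sum>c\<in>C. F a b c * g a x * h b y * l c z) * p x * r y * s z)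
   = (\<Sum>a\<in>A. \<Sum>b\<in>B. \<Sum>c\<in>C. F a b c * (\<Sum>x\<in>X. g a x * p x) * (\<Sum>y\<in>Y. h b y * r y) * (\<Sum>z\<in>Z. l c z * s z))"
proof -
  let ?G = "\<lambda>x y z a b c. F a b c * (g a x * p x) * (h b y * r y) * (l c z * s z)"
  have "(\<Sum>x\<in>X. \<Sum>y\<in>Y. \<Sum>z\<in>Z. (\<Sum>a\<in>A. \<Sum>b\<in>B. \<Sum>c\<in>C. F a b c * g a x * h b y * l c z) * p x * r y * s z)
    = (\<Sum>x\<in>X. \<Sum>y\<in>Y. \<Sum>z\<in>Z. \<Sum>a\<in>A. \<Sum>b\<in>B. \<Sum>c\<in>C. ?G x y z a b c)"
    by (simp add: sum_distrib_left sum_distrib_right mult_ac)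
  also have "\<dots> = (\<Sum>a\<in>A. \<Sum>x\<in>X. \<Sum>y\<in>Y. \<Sum>z\<in>Z. \<Sum>b\<in>B. \<Sum>c\<in>C. ?G x y z a b c)"
    by (rule sw3)
  also have "\<dots> = (\<Sum>a\<in>A. \<Sum>b\<in>B. \<Sum>x\<in>X. \<Sum>y\<in>Y. \<Sum>z\<in>Z. \<Sum>c\<in>C. ?G x y z a b c)"
    by (rule sum.cong[OF refl], rule sw3)
  also have "\<dots> = (\<Sum>a\<in>A. \<Sum>b\<in>B. \<Sum>c\<in>C. \<Sum>x\<in>X. \<Sum>y\<in>Y. \<Sum>z\<in>Z. ?G x y z a b c)"
    by (rule sum.cong[OF refl], rule sum.cong[OF refl], rule sw3)
  also have "\<dots> = (\<Sum>a\<in>A. \<Sum>b\<in>B. \<Sum>c\<in>C. F a b c * (\<Sum>x\<in>X. g a x * p x) * (\<Sum>y\<in>Y. h b y * r y) * (\<Sum>z\<in>Z. l c z * s z))"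
    by (simp add: sum_distrib_left sum_distrib_right mult_ac)
  finally show ?thesis .
qed



lemma dvd_small: "0 < (n::nat) \<Longrightarrow> n dvd m \<Longrightarrow> m < 2*n \<Longrightarrow> m = 0 \<or> m = n"
proof -
  assume a: "0 < n" "n dvd m" "m < 2*n"
  then obtain k where k: "m = n * k" by (auto elim: dvdE)
  then have "k < 2" using a by simp
  then have "k = 0 \<or> k = 1" by auto
  then show ?thesis using k by auto
qed

definition Ew :: "nat \<Rightarrow> 'a::{finite,field} \<Rightarrow> 'a" where
  "Ew e x = (if e = 0 then 1 - x^(CARD('a)-1) else - (x^(CARD('a)-1-e)))"

lemma Eorth:
  assumes "i < CARD('a::{finite,field})" "e < CARD('a)"
  shows "(\<Sum>x\<in>UNIV. Ew e x * (x::'a)^i) = (if i = e then 1 else 0)"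
proof -
  define n where "n = CARD('a) - 1"
  have n0: "0 < n" using card_ge2[where 'a='a] by (simp add: n_def)
  have qn: "CARD('a) = n + 1" using n0 by (simp add: n_def)
  have Ew_n: "Ew e x = (if e=0 then 1 - x^n else - (x^(n-e)))" for e and x :: 'a by (simp add: Ew_def n_def)
  have PSn: "(PS m :: 'a) = (if 0 < m \<and> n dvd m then -1 else 0)" for m
    using PS_formula[where 'a='a] by (simp add: n_def)
  show ?thesis
  proof (cases "e = 0")
    case True
    have "(\<Sum>x\<in>UNIV. Ew e x * (x::'a)^i) = (\<Sum>x\<in>UNIV. x^i - x^(i+n))"
      using True by (intro sum.cong) (auto simp: Ew_n algebra_simps power_add)
    also have "\<dots> = PS i - PS (i+n)" by (simp add: PS_def sum_subtractf)
    also have "\<dots> = (if i = e then 1 else 0)"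
    proof -
      have i: "i \<le> n" using assms qn by simp
      have d1: "n dvd i \<longleftrightarrow> i = 0 \<or> i = n" using dvd_small[OF n0, of i] i n0 by auto
      have d2: "n dvd (i+n) \<longleftrightarrow> i = 0 \<or> i = n"
        using dvd_small[OF n0, of "i+n"] i n0 by (auto simp: dvd_add_left_iff[OF dvd_refl])
      show ?thesis using True n0 d1 d2 by (auto simp: PSn)
    qed
    finally show ?thesis .
  next
    case False
    have "(\<Sum>x\<in>UNIV. Ew e x * (x::'a)^i) = (\<Sum>x\<in>UNIV. - (x^(n - e + i)))"
      using False by (intro sum.cong) (auto simp: Ew_n algebra_simps power_add)
    also have "\<dots> = - PS (n - e + i)" by (simp add: PS_def sum_negf)
    also have "\<dots> = (if i = e then 1 else 0)"
    proof -
      have i: "i \<le> n" "e \<le> n" using assms qn by auto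
      have "n - e + i < 2 * n" using i False by simp
      then have d: "n dvd (n - e + i) \<longleftrightarrow> n - e + i = 0 \<or> n - e + i = n"
        using dvd_small[OF n0, of "n - e + i"] n0 by auto
      show ?thesis using False i d by (auto simp: PSn)
    qed
    finally show ?thesis .
  qed
qed

lemma coeff_extract:
  fixes c :: "nat \<Rightarrow> nat \<Rightarrow> nat \<Rightarrow> 'a::{finite,field}"
  assumes rep: "is_reduced_rep c f" and abe: "a < CARD('a)" "b < CARD('a)" "e < CARD('a)"
  shows "(\<Sum>x\<in>UNIV. \<Sum>y\<in>UNIV. \<Sum>z\<in>UNIV. f x y z * Ew a x * Ew b y * Ew e z) = c a b e"
proof -
  have f: "f x y z = (\<Sum>i<CARD('a). \<Sum>j<CARD('a). \<Sum>k<CARD('a). c i j k * x ^ i * y ^ j * z ^ k)" for x y z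
    using rep by (simp add: is_reduced_rep_def)
  have "(\<Sum>x\<in>UNIV. \<Sum>y\<in>UNIV. \<Sum>z\<in>UNIV. f x y z * Ew a x * Ew b y * Ew e z)
     = (\<Sum>i<CARD('a). \<Sum>j<CARD('a). \<Sum>k<CARD('a). c i j k * (\<Sum>x\<in>UNIV. x^i * Ew a x) * (\<Sum>y\<in>UNIV. y^j * Ew b y) * (\<Sum>z\<in>UNIV. z^k * Ew e z))"
    unfolding f by (rule GS)
  also have "\<dots> = (\<Sum>i<CARD('a). \<Sum>j<CARD('a). \<Sum>k<CARD('a). (if k = e then (if j = b then (if i = a then c i j k else 0) else 0) else 0))"
  proof (intro sum.cong refl)
    fix i j k assume ijk: "i \<in> {..<CARD('a)}" "j \<in> {..<CARD('a)}" "k \<in> {..<CARD('a)}"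
    have E': "(\<Sum>x\<in>UNIV. (x::'a)^i * Ew e x) = (if i=e then 1 else 0)" if "i < CARD('a)" "e < CARD('a)" for i e
      using Eorth[OF that] by (simp add: mult.commute)
    show "c i j k * (\<Sum>x\<in>UNIV. x^i * Ew a x) * (\<Sum>y\<in>UNIV. y^j * Ew b y) * (\<Sum>z\<in>UNIV. z^k * Ew e z) =
        (if k = e then (if j = b then (if i = a then c i j k else 0) else 0) else 0)"
      using ijk abe by (simp add: E')
  qed
  also have "\<dots> = c a b e" using abe by (simp add: sum.delta)
  finally show ?thesis .
qed

lemma rep_unique:
  fixes c c' :: "nat \<Rightarrow> nat \<Rightarrow> nat \<Rightarrow> 'a::{finite,field}"
  assumes "is_reduced_rep c f" "is_reduced_rep c' f"
  shows "c = c'"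
proof (intro ext)
  fix i j k
  show "c i j k = c' i j k"
  proof (cases "i < CARD('a) \<and> j < CARD('a) \<and> k < CARD('a)")
    case True
    then show ?thesis using coeff_extract[OF assms(1), of i j k] coeff_extract[OF assms(2), of i j k] by simp
  next
    case False
    then have "c i j k = 0" "c' i j k = 0" using assms unfolding is_reduced_rep_def by blast+
    then show ?thesis by simp
  qed
qed

definition dd :: "'a::{finite,field} \<Rightarrow> nat \<Rightarrow> 'a" where
  "dd a i = (if i = 0 then 1 else 0) - of_nat (CARD('a) - 1 choose i) * (-a)^(CARD('a) - 1 - i)"

lemma dd_sum: "(\<Sum>i<CARD('a). dd a i * x^i) = (if x = a then 1 else (0::'a::{finite,field}))"
proof -
  have c2: "CARD('a) \<ge> 2" by (rule card_ge2)
  have e: "{..<CARD('a)} = {..CARD('a) - 1}" using c2 by auto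
  have t: "dd a i * x^i = (if i = 0 then 1 else 0) - of_nat (CARD('a) - 1 choose i) * x^i * (-a)^(CARD('a) - 1 - i)" for i
    by (simp add: dd_def algebra_simps)
  have "(\<Sum>i<CARD('a). dd a i * x^i) = (\<Sum>i\<le>CARD('a) - 1. (if i = 0 then 1 else 0)) -
      (\<Sum>i\<le>CARD('a) - 1. of_nat (CARD('a) - 1 choose i) * x^i * (-a)^(CARD('a) - 1 - i))"
    unfolding e t by (rule sum_subtractf)
  also have "\<dots> = 1 - (x + - a)^(CARD('a) - 1)"
    unfolding binomial_ring[of x "-a"] by simp
  also have "\<dots> = (if x = a then 1 else 0)"
    using c2 fermat[of "x - a"] by (auto simp: power_0_left)
  finally show ?thesis .
qed

lemma rep_exists:
  fixes f :: "'a::{finite,field} \<Rightarrow> 'a \<Rightarrow> 'a \<Rightarrow> 'a"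
  shows "\<exists>c. is_reduced_rep c f"
proof -
  define c where "c i j k = (if i < CARD('a) \<and> j < CARD('a) \<and> k < CARD('a) then
     (\<Sum>a\<in>UNIV. \<Sum>b\<in>UNIV. \<Sum>e\<in>UNIV. f a b e * dd a i * dd b j * dd e k) else 0)" for i j k
  have "f x y z = (\<Sum>i<CARD('a). \<Sum>j<CARD('a). \<Sum>k<CARD('a). c i j k * x ^ i * y ^ j * z ^ k)" for x y z
  proof -
    have "(\<Sum>i<CARD('a). \<Sum>j<CARD('a). \<Sum>k<CARD('a). c i j k * x ^ i * y ^ j * z ^ k)
      = (\<Sum>i<CARD('a). \<Sum>j<CARD('a). \<Sum>k<CARD('a).
          (\<Sum>a\<in>UNIV. \<Sum>b\<in>UNIV. \<Sum>e\<in>UNIV. f a b e * dd a i * dd b j * dd e k) * x ^ i * y ^ j * z ^ k)"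
      by (intro sum.cong refl) (simp add: c_def)
    also have "\<dots> = (\<Sum>a\<in>UNIV. \<Sum>b\<in>UNIV. \<Sum>e\<in>UNIV. f a b e * (\<Sum>i<CARD('a). dd a i * x^i)
        * (\<Sum>j<CARD('a). dd b j * y^j) * (\<Sum>k<CARD('a). dd e k * z^k))"
      by (rule GS)
    also have "\<dots> = (\<Sum>a\<in>UNIV. \<Sum>b\<in>UNIV. \<Sum>e\<in>UNIV. (if z = e then (if y = b then (if x = a then f a b e else 0) else 0) else 0))"
      by (intro sum.cong refl) (simp add: dd_sum)
    also have "\<dots> = f x y z" by (simp add: sum.delta sum.delta')
    finally show ?thesis by simp
  qed
  moreover have "\<forall>i j k. c i j k \<noteq> 0 \<longrightarrow> i < CARD('a) \<and> j < CARD('a) \<and> k < CARD('a)"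
    by (simp add: c_def)
  ultimately have "is_reduced_rep c f" unfolding is_reduced_rep_def
    by (intro conjI allI) (blast, assumption)
  then show ?thesis by blast
qed

lemma rep_ex1: "\<exists>!c. is_reduced_rep c (f :: 'a::{finite,field} \<Rightarrow> 'a \<Rightarrow> 'a \<Rightarrow> 'a)"
proof -
  obtain c where c: "is_reduced_rep c f" using rep_exists by blast
  show ?thesis
    by (rule ex1I[of _ c]) (use c rep_unique in auto)
qed

lemma reduced_coeffs_rep: "is_reduced_rep (reduced_coeffs f) f"
  unfolding reduced_coeffs_def by (rule theI'[OF rep_ex1])



lemma PS_zero: "m < CARD('a::{finite,field}) - 1 \<Longrightarrow> (PS m :: 'a) = 0"
  by (rule PS_small)

lemma sum_inv_pow: "(\<Sum>x\<in>UNIV. (inverse x)^m) = (PS m :: 'a::{finite,field})"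
  unfolding PS_def by (rule reidx[where j=inverse]) auto

lemma sum_transl:
  fixes P Q :: "'a::ab_group_add \<Rightarrow> 'a"
  assumes that: "\<And>x. Q (P x) = x" "\<And>y. P (Q y) = y"
  shows "(\<Sum>x\<in>UNIV. h (P x + Y)) = (\<Sum>x\<in>UNIV. h x)"
  by (rule reidx[where j="\<lambda>u. Q (u - Y)"]) (auto simp: that)

lemma tpoly_eq: "tpoly w = w + (if w = 0 then 1 else 0) - (if w = 1 then 1 else (0::'a::{finite,field}))"
proof -
  have c2: "CARD('a) \<ge> 2" by (rule card_ge2)
  have e: "{0..CARD('a) - 2} = {..<CARD('a) - 1}" using c2 by auto
  have "(\<Sum>k\<in>{0..CARD('a) - 2}. w ^ k) = (if w = 0 then 1 else if w = 1 then -1 else 0)"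
  proof (cases "w = 0")
    case True
    have "(\<Sum>k<CARD('a) - 1. w ^ k) = (\<Sum>k<CARD('a) - 1. if k = 0 then 1 else 0)"
      by (rule sum.cong) (auto simp: True power_0_left)
    also have "\<dots> = 1" using c2 by simp
    finally show ?thesis using True e by simp
  next
    case F: False
    show ?thesis
    proof (cases "w = 1")
      case True
      have "(\<Sum>k<CARD('a) - 1. w ^ k) = of_nat (CARD('a) - 1)" using True by simp
      also have "\<dots> = -1" using card_zero[where 'a='a] c2 by (simp add: of_nat_diff)
      finally show ?thesis using True e by simp
    next
      case False
      have "(\<Sum>k<CARD('a) - 1. w ^ k) = (w ^ (CARD('a) - 1) - 1) / (w - 1)"
        by (rule geometric_sum[OF False])
      also have "\<dots> = 0" using fermat[OF F] by simp
      finally show ?thesis using F False e by simp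
    qed
  qed
  then show ?thesis unfolding tpoly_def by auto
qed

lemma pow_qm2: "x ^ (CARD('a) - 2) = inverse (x::'a::{finite,field})" if "CARD('a) > 2"
proof (cases "x = 0")
  case True then show ?thesis using that by (simp add: power_0_left)
next
  case False
  have "CARD('a) - 1 = Suc (CARD('a) - 2)" using that by simp
  then have "x ^ (CARD('a) - 2) * x = x ^ (CARD('a) - 1)" by (simp only: power_Suc2)
  then have "x ^ (CARD('a) - 2) * x = 1" using fermat[OF False] by simp
  then show ?thesis using False by (simp add: field_simps)
qed

lemma pow_qm4: "x ^ (CARD('a) - 4) = inverse (x^3::'a::{finite,field})" if "CARD('a) > 4"
proof (cases "x = 0")
  case True then show ?thesis using that by (simp add: power_0_left)
next
  case False
  have "CARD('a) - 1 = (CARD('a) - 4) + 3" using that by simp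
  then have "x ^ (CARD('a) - 4) * x^3 = x ^ (CARD('a) - 1)" by (simp only: power_add)
  then have "x ^ (CARD('a) - 4) * x^3 = 1" using fermat[OF False] by simp
  then show ?thesis using False by (simp add: field_simps)
qed

context
  fixes r :: nat
  assumes card3: "CARD('a::{finite,field}) = 3 ^ r" and cardgt: "CARD('a) > 3"
begin

lemma q9: "CARD('a) \<ge> 9"
proof -
  have "r \<ge> 2"
  proof (rule ccontr)
    assume "\<not> r \<ge> 2" then have "r = 0 \<or> r = 1" by auto
    then show False using cardgt card3 by auto
  qed
  then have "(3::nat)^2 \<le> 3^r" by (rule power_increasing) auto
  then show ?thesis using card3 by simp
qed

lemma three0: "(3::'a) = 0"
proof -
  have "(3::'a) ^ r = 0" using card_zero[where 'a='a] card3 by simp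
  then show ?thesis by simp
qed

lemma cube_diff: "(x - y)^3 = x^3 - (y::'a)^3"
proof -
  have "(x - y)^3 = x^3 - y^3 - 3 * (x^2*y - x*y^2)" by (simp add: power3_eq_cube power2_eq_square algebra_simps)
  then show ?thesis by (simp add: three0)
qed

lemma cube_inj: "inj (\<lambda>x::'a. x^3)"
proof (rule injI)
  fix x y :: 'a assume "x^3 = y^3"
  then have "(x - y)^3 = 0" by (simp add: cube_diff)
  then show "x = y" by simp
qed

definition cr :: "'a \<Rightarrow> 'a" where "cr = inv (\<lambda>x::'a. x^3)"

lemma cr1: "cr (x^3) = x" unfolding cr_def by (rule inv_f_f[OF cube_inj])
lemma cr2: "(cr y)^3 = y"
proof -
  have "surj (\<lambda>x::'a. x^3)" by (rule finite_UNIV_inj_surj[OF _ cube_inj]) simp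
  then show ?thesis unfolding cr_def by (metis surj_f_inv_f)
qed

end



context
  fixes r :: nat
  assumes card3: "CARD('a::{finite,field}) = 3 ^ r" and cardgt: "CARD('a) > 3"
begin

lemma q9': "CARD('a) \<ge> 9" by (rule q9[OF card3 cardgt])
lemma three: "(3::'a) = 0" by (rule three0[OF card3 cardgt])

lemma PS1: "(PS 1 :: 'a) = 0" using q9' by (intro PS_small) simp
lemma PS2: "(PS 2 :: 'a) = 0" using q9' by (intro PS_small) simp

lemma sum_id0: "(\<Sum>z\<in>UNIV. (z::'a)) = 0" using PS1 by (simp add: PS_def)
lemma sum_inv0: "(\<Sum>z\<in>UNIV. inverse (z::'a)) = 0" using sum_inv_pow[of 1, where 'a='a] PS1 by simp

lemma inv_times: "inverse z * z = (z::'a) ^ (CARD('a) - 1)"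
proof (cases "z = 0")
  case True then show ?thesis using q9' by (simp add: power_0_left)
next
  case False then show ?thesis using fermat[OF False] by simp
qed

lemma sum_z: "(\<Sum>z\<in>UNIV. tpoly (w + inverse z) * z) = -1 - inverse w - inverse (1 - (w::'a))"
proof -
  have e1: "(w + inverse z = 0) = (z = inverse (-w))" for z :: 'a
  proof -
    have "(w + inverse z = 0) = (inverse z = -w)" by (auto simp: add_eq_0_iff2 algebra_simps)
    also have "\<dots> = (z = inverse (-w))" by (metis inverse_inverse_eq)
    finally show ?thesis .
  qed
  have e2: "(w + inverse z = 1) = (z = inverse (1 - w))" for z :: 'a
  proof -
    have "(w + inverse z = 1) = (inverse z = 1 - w)" by (auto simp: algebra_simps)
    also have "\<dots> = (z = inverse (1 - w))" by (metis inverse_inverse_eq)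
    finally show ?thesis .
  qed
  have t: "tpoly (w + inverse z) * z = (w + inverse z) * z + (if w + inverse z = 0 then z else 0) - (if w + inverse z = 1 then z else 0)" for z
    by (cases "w + inverse z = 0"; cases "w + inverse z = 1") (simp_all add: tpoly_eq)
  have s1: "(\<Sum>z\<in>UNIV. if w + inverse z = 0 then z else 0) = inverse (-w)"
    by (simp only: e1) (simp add: sum.delta')
  have s2: "(\<Sum>z\<in>UNIV. if w + inverse z = 1 then z else 0) = inverse (1 - w)"
    by (simp only: e2) (simp add: sum.delta')
  have "(\<Sum>z\<in>UNIV. tpoly (w + inverse z) * z) = w * (\<Sum>z\<in>UNIV. z) + PS (CARD('a) - 1) + inverse (-w) - inverse (1 - w)"
    unfolding t by (simp only: distrib_right sum.distrib sum_subtractf s1 s2 sum_distrib_left[symmetric] inv_times PS_def)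
  also have "\<dots> = -1 - inverse w - inverse (1 - w)" using PS_qm1[where 'a='a] by (simp add: sum_id0)
  finally show ?thesis .
qed

definition hh :: "'a \<Rightarrow> 'a" where "hh w = inverse w + inverse (1 - w)"

lemma hh_t: "hh (tpoly u) = hh u"
  by (cases "u = 0"; cases "u = 1") (auto simp: tpoly_eq hh_def)

lemma Pl: "(\<Sum>b\<in>UNIV. inverse b * inverse (A + b)) = - ((inverse (A::'a))^2)"
proof (cases "A = 0")
  case True
  have "(\<Sum>b\<in>UNIV. inverse b * inverse (A + b)) = (\<Sum>b\<in>UNIV. (inverse b)^2)"
    using True by (simp add: power2_eq_square)
  also have "\<dots> = 0" using sum_inv_pow[of 2, where 'a='a] PS2 by simp
  finally show ?thesis using True by simp
next
  case False
  have t: "inverse b * inverse (A + b) = inverse A * (inverse b - inverse (A + b))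
     + (if b = 0 then (inverse A)^2 else 0) + (if b = -A then (inverse A)^2 else 0)" for b
  proof -
    consider "b = 0" | "b = -A" | "b \<noteq> 0" "b \<noteq> -A" by blast
    then show ?thesis
    proof cases
      case 1 then show ?thesis using False by (simp add: power2_eq_square)
    next
      case 2 then show ?thesis using False by (simp add: power2_eq_square)
    next
      case 3
      then have "A + b \<noteq> 0" by (metis add.commute add_eq_0_iff)
      then show ?thesis using 3 False by (simp add: field_simps)
    qed
  qed
  have s2: "(\<Sum>b\<in>UNIV. inverse (A + b)) = 0"
  proof -
    have "(\<Sum>b\<in>UNIV. inverse (A + b)) = (\<Sum>b\<in>UNIV. inverse (id b + A))" by (simp add: add.commute)
    also have "\<dots> = (\<Sum>b\<in>UNIV. inverse b)" by (rule sum_transl[where Q=id]) auto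
    finally show ?thesis using sum_inv0 by simp
  qed
  have "(\<Sum>b\<in>UNIV. inverse b * inverse (A + b)) = inverse A * ((\<Sum>b\<in>UNIV. inverse b) - (\<Sum>b\<in>UNIV. inverse (A + b))) + (inverse A)^2 + (inverse A)^2"
    unfolding t by (simp only: sum.distrib sum_subtractf sum_distrib_left[symmetric]) (simp add: sum.delta')
  also have "\<dots> = 2 * (inverse A)^2" by (simp add: sum_inv0 s2)
  also have "\<dots> = - ((inverse A)^2)"
  proof -
    have "(2::'a) = 3 - 1" by simp
    then show ?thesis by (simp add: three)
  qed
  finally show ?thesis .
qed

lemma Ql: "(\<Sum>y\<in>UNIV. y * hh (A + inverse y)) = - ((inverse (A::'a))^2) + (inverse (1 - A))^2"
proof -
  have "(\<Sum>y\<in>UNIV. y * hh (A + inverse y)) = (\<Sum>b\<in>UNIV. inverse b * hh (A + inverse (inverse b)))"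
    by (rule reidx[where j=inverse, symmetric]) auto
  also have "\<dots> = (\<Sum>b\<in>UNIV. inverse b * inverse (A + b)) + (\<Sum>b\<in>UNIV. inverse b * inverse (1 - A - b))"
    by (simp add: hh_def distrib_left sum.distrib algebra_simps)
  also have "(\<Sum>b\<in>UNIV. inverse b * inverse (1 - A - b)) = - (\<Sum>b\<in>UNIV. inverse b * inverse ((A - 1) + b))"
  proof -
    have "inverse b * inverse (1 - A - b) = - (inverse b * inverse ((A - 1) + b))" for b :: 'a
    proof -
      have "1 - A - b = - ((A - 1) + b)" by (simp add: algebra_simps)
      then have "inverse (1 - A - b) = - inverse ((A - 1) + b)" by (metis inverse_minus_eq)
      then show ?thesis by simp
    qed
    then show ?thesis by (simp add: sum_negf)
  qed
  also have "\<dots> = (inverse (A - 1))^2" by (simp add: Pl)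
  also have "(inverse (A - 1))^2 = (inverse (1 - A))^2"
  proof -
    have "A - 1 = - (1 - A)" by simp
    then show ?thesis by (simp only: inverse_minus_eq power2_eq_square) simp
  qed
  finally show ?thesis by (simp add: Pl)
qed

end



context
  fixes r :: nat
  assumes card3: "CARD('a::{finite,field}) = 3 ^ r" and cardgt: "CARD('a) > 3"
begin

lemma q9'': "CARD('a) \<ge> 9" by (rule q9[OF card3 cardgt])
lemma three': "(3::'a) = 0" by (rule three0[OF card3 cardgt])

lemma sum_refl_inv: "(\<Sum>s\<in>UNIV. (inverse (1 - s))^m) = (PS m :: 'a)"
proof -
  have "(\<Sum>s\<in>UNIV. (inverse (1 - s))^m) = (\<Sum>s\<in>UNIV. (inverse (uminus s + (1::'a)))^m)" by (simp add: algebra_simps)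
  also have "\<dots> = (\<Sum>s\<in>UNIV. (inverse (s::'a))^m)" by (rule sum_transl[where Q=uminus]) auto
  finally show ?thesis by (simp add: sum_inv_pow)
qed

lemma RR1: "(\<Sum>s\<in>UNIV. inverse s * inverse (1 - s)) = (1::'a)"
proof -
  have t: "inverse s * inverse (1 - s) = inverse s + inverse (1 - s) - (if s = 0 then 1 else 0) - (if s = 1 then 1 else 0)" for s :: 'a
  proof -
    consider "s = 0" | "s = 1" | "s \<noteq> 0" "s \<noteq> 1" by blast
    then show ?thesis
    proof cases
      case 3
      then have "1 - s \<noteq> 0" by simp
      then show ?thesis using 3 by (simp add: field_simps)
    qed auto
  qed
  have "(\<Sum>s\<in>UNIV. inverse s * inverse (1 - s)) = (\<Sum>s\<in>UNIV. inverse (s::'a)) + (\<Sum>s\<in>UNIV. inverse (1 - s)) - 1 - 1"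
    unfolding t by (simp add: sum.distrib sum_subtractf sum.delta)
  also have "\<dots> = - 2" using sum_inv0[OF card3 cardgt] sum_refl_inv[of 1] PS1[OF card3 cardgt] by simp
  also have "\<dots> = 1" proof - have "(-2::'a) = 1 - 3" by simp then show ?thesis by (simp add: three') qed
  finally show ?thesis .
qed

lemma RRstep:
  assumes "1 \<le> n" "Suc n < CARD('a) - 1"
  shows "(\<Sum>s\<in>UNIV. inverse s * (inverse (1 - s))^(Suc n)) = (\<Sum>s\<in>UNIV. inverse s * (inverse (1 - s))^n) - (1::'a)"
proof -
  have t: "inverse s * (inverse (1 - s))^(Suc n) = inverse s * (inverse (1 - s))^n + (inverse (1 - s))^(Suc n) - (if s = 0 then 1 else 0)" for s :: 'a
  proof -
    consider "s = 0" | "s = 1" | "s \<noteq> 0" "s \<noteq> 1" by blast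
    then show ?thesis
    proof cases
      case 3
      then have ne: "1 - s \<noteq> 0" by simp
      have key: "inverse s * inverse (1 - s) = inverse s + inverse (1 - s)" using 3 ne by (simp add: field_simps)
      have "inverse s * (inverse (1 - s))^(Suc n) = (inverse s * inverse (1 - s)) * (inverse (1 - s))^n"
        by (simp add: algebra_simps)
      also have "\<dots> = inverse s * (inverse (1 - s))^n + (inverse (1 - s))^(Suc n)"
        unfolding key by (simp add: algebra_simps)
      finally show ?thesis using 3 by simp
    next
      case 2 then show ?thesis using assms by (simp add: power_0_left)
    qed simp
  qed
  have "(\<Sum>s\<in>UNIV. inverse s * (inverse (1 - s))^(Suc n)) = (\<Sum>s\<in>UNIV. inverse (s::'a) * (inverse (1 - s))^n) + (\<Sum>s\<in>UNIV. (inverse (1 - s))^(Suc n)) - 1"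
    unfolding t by (simp add: sum.distrib sum_subtractf sum.delta)
  also have "(\<Sum>s\<in>UNIV. (inverse (1 - s))^(Suc n)) = (0::'a)"
    using sum_refl_inv[of "Suc n"] PS_small[OF assms(2)] by simp
  finally show ?thesis by simp
qed

lemma RR: "1 \<le> n \<Longrightarrow> n < CARD('a) - 1 \<Longrightarrow> (\<Sum>s\<in>UNIV. inverse s * (inverse (1 - s))^n) = 2 - (of_nat n :: 'a)"
proof (induction n rule: nat_induct_at_least)
  case base then show ?case using RR1 by simp
next
  case (Suc n)
  then have "(\<Sum>s\<in>UNIV. inverse s * (inverse (1 - s))^(Suc n)) = (2 - of_nat n) - (1::'a)"
    using RRstep[of n] by simp
  then show ?case by simp
qed

end



context
  fixes r :: nat
  assumes card3: "CARD('a::{finite,field}) = 3 ^ r" and cardgt: "CARD('a) > 3"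
begin

lemma q9g: "CARD('a) \<ge> 9" by (rule q9[OF card3 cardgt])

definition F0 :: "'a \<Rightarrow> 'a \<Rightarrow> 'a \<Rightarrow> 'a" where
  "F0 x y z = tpoly (tpoly (inverse (x^3) + inverse y) + inverse z)"

lemma F0_eq: "tpoly (tpoly (x ^ (CARD('a) - 4) + y ^ (CARD('a) - 2)) + z ^ (CARD('a) - 2)) = F0 x y z"
  using pow_qm2[of x] pow_qm2[of y] pow_qm2[of z] pow_qm4[of x] q9g by (simp add: F0_def)

lemma S111: "(\<Sum>x\<in>UNIV. \<Sum>y\<in>UNIV. \<Sum>z\<in>UNIV. F0 x y z * x * y * z) = (1::'a)"
proof -
  have step1: "(\<Sum>z\<in>UNIV. F0 x y z * x * y * z) = x * (y * (-1 - hh (inverse (x^3) + inverse y)))" for x y :: 'a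
  proof -
    have "(\<Sum>z\<in>UNIV. F0 x y z * x * y * z) = x * y * (\<Sum>z\<in>UNIV. tpoly (tpoly (inverse (x^3) + inverse y) + inverse z) * z)"
      by (simp add: F0_def sum_distrib_left mult_ac)
    also have "\<dots> = x * y * (-1 - inverse (tpoly (inverse (x^3) + inverse y)) - inverse (1 - tpoly (inverse (x^3) + inverse y)))"
      by (simp only: sum_z[OF card3 cardgt])
    also have "\<dots> = x * y * (-1 - hh (tpoly (inverse (x^3) + inverse y)))"
      by (simp add: hh_def[OF card3 cardgt])
    finally show ?thesis by (simp add: hh_t[OF card3 cardgt] mult_ac)
  qed
  have step2: "(\<Sum>y\<in>UNIV. x * (y * (-1 - hh (inverse (x^3) + inverse y)))) = x * ((inverse (inverse (x^3)))^2 - (inverse (1 - inverse (x^3)))^2)" for x :: 'a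
  proof -
    have "(\<Sum>y\<in>UNIV. x * (y * (-1 - hh (inverse (x^3) + inverse y)))) = x * (- (\<Sum>y\<in>UNIV. y) - (\<Sum>y\<in>UNIV. y * hh (inverse (x^3) + inverse y)))"
      by (simp add: sum_distrib_left algebra_simps sum_subtractf sum_negf)
    also have "\<dots> = x * ((inverse (inverse (x^3)))^2 - (inverse (1 - inverse (x^3)))^2)"
      by (simp add: sum_id0[OF card3 cardgt] Ql[OF card3 cardgt])
    finally show ?thesis .
  qed
  have "(\<Sum>x\<in>UNIV. \<Sum>y\<in>UNIV. \<Sum>z\<in>UNIV. F0 x y z * x * y * z) = (\<Sum>x\<in>UNIV. x * ((inverse (inverse (x^3)))^2 - (inverse (1 - inverse (x^3)))^2))"
    by (simp add: step1 step2)
  also have "\<dots> = (\<Sum>x\<in>UNIV. x ^ 7) - (\<Sum>x\<in>UNIV. x * (inverse (1 - inverse (x^3)))^2)"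
    by (simp add: algebra_simps sum_subtractf power_mult_distrib flip: power_mult power_Suc)
  also have "(\<Sum>x\<in>UNIV. (x::'a) ^ 7) = 0"
    using PS_small[of 7, where 'a='a] q9g by (simp add: PS_def)
  also have "(\<Sum>x\<in>UNIV. x * (inverse (1 - inverse (x^3)))^2) = (\<Sum>s\<in>UNIV. inverse s * (inverse (1 - inverse (inverse s ^3)))^2 :: 'a)"
    by (rule reidx[where j=inverse, symmetric]) auto
  also have "\<dots> = (\<Sum>s\<in>UNIV. inverse s * (inverse (1 - s))^6)"
  proof (rule sum.cong[OF refl])
    fix s :: 'a
    have "inverse (inverse s ^ 3) = s^3" by (simp add: power_inverse)
    moreover have "1 - s^3 = (1 - s)^3" using cube_diff[OF card3 cardgt, of 1 s] by simp
    ultimately show "inverse s * (inverse (1 - inverse (inverse s ^3)))^2 = inverse s * (inverse (1 - s))^6"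
      by (simp add: power_inverse flip: power_mult)
  qed
  also have "\<dots> = 2 - 6" using RR[OF card3 cardgt, of 6] q9g by simp
  also have "(0::'a) - (2 - 6) = 1"
  proof -
    have "(0::'a) - (2 - 6) = 1 + 3" by simp
    then show ?thesis by (simp add: three0[OF card3 cardgt])
  qed
  finally show ?thesis .
qed

definition KK :: "'a \<Rightarrow> 'a" where "KK Z = (\<Sum>u\<in>UNIV. tpoly (tpoly u + Z))"

lemma sumx: "(\<Sum>x\<in>UNIV. F0 x y z) = KK (inverse z)"
proof -
  have "(\<Sum>x\<in>UNIV. F0 x y z) = (\<Sum>x\<in>UNIV. (\<lambda>u. tpoly (tpoly u + inverse z)) ((\<lambda>x. inverse (x^3)) x + inverse y))"
    by (simp add: F0_def)
  also have "\<dots> = KK (inverse z)" unfolding KK_def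
    by (rule sum_transl[where Q="\<lambda>u. cr (inverse u)"]) (simp_all add: cr1[OF card3 cardgt] cr2[OF card3 cardgt] power_inverse)
  finally show ?thesis .
qed

lemma sumy: "(\<Sum>y\<in>UNIV. F0 x y z) = KK (inverse z)"
proof -
  have "(\<Sum>y\<in>UNIV. F0 x y z) = (\<Sum>y\<in>UNIV. (\<lambda>u. tpoly (tpoly u + inverse z)) (inverse y + inverse (x^3)))"
    by (simp add: F0_def add.commute)
  also have "\<dots> = KK (inverse z)" unfolding KK_def
    by (rule sum_transl[where Q="inverse"]) simp_all
  finally show ?thesis .
qed

lemma sumz: "(\<Sum>z\<in>UNIV. F0 x y z) = (\<Sum>v\<in>UNIV. tpoly v)"
proof -
  have "(\<Sum>z\<in>UNIV. F0 x y z) = (\<Sum>z\<in>UNIV. tpoly (inverse z + tpoly (inverse (x^3) + inverse y)))"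
    by (simp add: F0_def add.commute)
  also have "\<dots> = (\<Sum>v\<in>UNIV. tpoly v)"
    by (rule sum_transl[where Q="inverse"]) simp_all
  finally show ?thesis .
qed

lemma VAN:
  assumes "\<alpha> < CARD('a) - 1" "\<beta> < CARD('a) - 1" "\<alpha> = 0 \<or> \<beta> = 0 \<or> \<gamma> = 0"
  shows "(\<Sum>x\<in>UNIV. \<Sum>y\<in>UNIV. \<Sum>z\<in>UNIV. F0 x y z * x^\<alpha> * y^\<beta> * z^\<gamma>) = (0::'a)"
proof -
  have PA: "(\<Sum>x\<in>UNIV. (x::'a)^\<alpha>) = 0" using PS_small[OF assms(1)] by (simp add: PS_def)
  have PB: "(\<Sum>x\<in>UNIV. (x::'a)^\<beta>) = 0" using PS_small[OF assms(2)] by (simp add: PS_def)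
  consider "\<gamma> = 0" | "\<beta> = 0" | "\<alpha> = 0" using assms(3) by blast
  then show ?thesis
  proof cases
    case 1
    define C where "C = (\<Sum>v\<in>UNIV. tpoly (v::'a))"
    have "(\<Sum>x\<in>UNIV. \<Sum>y\<in>UNIV. \<Sum>z\<in>UNIV. F0 x y z * x^\<alpha> * y^\<beta> * z^\<gamma>)
        = (\<Sum>x\<in>UNIV. \<Sum>y\<in>UNIV. x^\<alpha> * (y^\<beta> * (\<Sum>z\<in>UNIV. F0 x y z)))"
      using 1 by (simp add: sum_distrib_left mult_ac)
    also have "\<dots> = (\<Sum>x\<in>UNIV. \<Sum>y\<in>UNIV. x^\<alpha> * (y^\<beta> * C))"
      by (simp only: sumz C_def)
    also have "\<dots> = (\<Sum>x\<in>UNIV. x^\<alpha> * (\<Sum>y\<in>UNIV. y^\<beta> * C))"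
      by (simp add: sum_distrib_left)
    also have "\<dots> = (\<Sum>x\<in>UNIV. x^\<alpha>) * (\<Sum>y\<in>UNIV. y^\<beta> * C)"
      by (rule sum_distrib_right[symmetric])
    finally show ?thesis using PA by simp
  next
    case 2
    have "(\<Sum>x\<in>UNIV. \<Sum>y\<in>UNIV. \<Sum>z\<in>UNIV. F0 x y z * x^\<alpha> * y^\<beta> * z^\<gamma>)
        = (\<Sum>x\<in>UNIV. \<Sum>z\<in>UNIV. \<Sum>y\<in>UNIV. F0 x y z * x^\<alpha> * z^\<gamma>)"
      by (rule sum.cong[OF refl], subst sum.swap, simp add: 2)
    also have "\<dots> = (\<Sum>x\<in>UNIV. \<Sum>z\<in>UNIV. x^\<alpha> * (z^\<gamma> * (\<Sum>y\<in>UNIV. F0 x y z)))"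
      by (simp add: sum_distrib_left sum_distrib_right mult_ac)
    also have "\<dots> = (\<Sum>x\<in>UNIV. \<Sum>z\<in>UNIV. x^\<alpha> * (z^\<gamma> * KK (inverse z)))"
      by (simp only: sumy)
    also have "\<dots> = (\<Sum>x\<in>UNIV. x^\<alpha> * (\<Sum>z\<in>UNIV. z^\<gamma> * KK (inverse z)))"
      by (simp add: sum_distrib_left)
    also have "\<dots> = (\<Sum>x\<in>UNIV. x^\<alpha>) * (\<Sum>z\<in>UNIV. z^\<gamma> * KK (inverse z))"
      by (rule sum_distrib_right[symmetric])
    finally show ?thesis using PA by simp
  next
    case 3
    have "(\<Sum>x\<in>UNIV. \<Sum>y\<in>UNIV. \<Sum>z\<in>UNIV. F0 x y z * x^\<alpha> * y^\<beta> * z^\<gamma>)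
        = (\<Sum>y\<in>UNIV. \<Sum>x\<in>UNIV. \<Sum>z\<in>UNIV. F0 x y z * y^\<beta> * z^\<gamma>)"
      by (subst sum.swap, simp add: 3)
    also have "\<dots> = (\<Sum>y\<in>UNIV. \<Sum>z\<in>UNIV. \<Sum>x\<in>UNIV. F0 x y z * y^\<beta> * z^\<gamma>)"
      by (rule sum.cong[OF refl], rule sum.swap)
    also have "\<dots> = (\<Sum>y\<in>UNIV. \<Sum>z\<in>UNIV. y^\<beta> * (z^\<gamma> * (\<Sum>x\<in>UNIV. F0 x y z)))"
      by (simp add: sum_distrib_left sum_distrib_right mult_ac)
    also have "\<dots> = (\<Sum>y\<in>UNIV. \<Sum>z\<in>UNIV. y^\<beta> * (z^\<gamma> * KK (inverse z)))"
      by (simp only: sumx)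
    also have "\<dots> = (\<Sum>y\<in>UNIV. y^\<beta> * (\<Sum>z\<in>UNIV. z^\<gamma> * KK (inverse z)))"
      by (simp add: sum_distrib_left)
    also have "\<dots> = (\<Sum>y\<in>UNIV. y^\<beta>) * (\<Sum>z\<in>UNIV. z^\<gamma> * KK (inverse z))"
      by (rule sum_distrib_right[symmetric])
    finally show ?thesis using PB by simp
  qed
qed

end



lemma neg3: "(\<Sum>x\<in>UNIV. \<Sum>y\<in>UNIV. \<Sum>z\<in>UNIV. g x y z * - (x^\<alpha>) * - (y^\<beta>) * - (z^\<gamma>))
   = - (\<Sum>x\<in>UNIV. \<Sum>y\<in>UNIV. \<Sum>z\<in>UNIV. g x y z * x^\<alpha> * y^\<beta> * (z::'a::{finite,field})^\<gamma>)"
  by (simp add: sum_negf)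

theorem mainTheorem16:
  fixes r :: nat
  assumes "CARD('a::{finite,field}) = 3 ^ r" and "CARD('a) > 3"
  shows "reduced_degree
           (\<lambda>(x1::'a) x2 x3. tpoly (tpoly (x1 ^ (CARD('a) - 4) + x2 ^ (CARD('a) - 2))
                                   + x3 ^ (CARD('a) - 2)))
         = 3 * (CARD('a) - 2)"
proof -
  note card3 = assms(1) and cardgt = assms(2)
  have q9: "CARD('a) \<ge> 9" by (rule q9[OF card3 cardgt])
  define f where "f = (\<lambda>x y z. F0 x y (z::'a))"
  have fe: "(\<lambda>(x1::'a) x2 x3. tpoly (tpoly (x1 ^ (CARD('a) - 4) + x2 ^ (CARD('a) - 2))
                                   + x3 ^ (CARD('a) - 2))) = f"
    unfolding f_def by (intro ext) (rule F0_eq[OF card3 cardgt])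
  define c where "c = reduced_coeffs f"
  have rep: "is_reduced_rep c f" unfolding c_def by (rule reduced_coeffs_rep)
  have coef: "c a b e = - (\<Sum>x\<in>UNIV. \<Sum>y\<in>UNIV. \<Sum>z\<in>UNIV. F0 x y z * x^(CARD('a) - 1 - a) * y^(CARD('a) - 1 - b) * z^(CARD('a) - 1 - e))"
    if "1 \<le> a" "a < CARD('a)" "1 \<le> b" "b < CARD('a)" "1 \<le> e" "e < CARD('a)" for a b e
  proof -
    have "c a b e = (\<Sum>x\<in>UNIV. \<Sum>y\<in>UNIV. \<Sum>z\<in>UNIV. f x y z * Ew a x * Ew b y * Ew e z)"
      using coeff_extract[OF rep, of a b e] that by simp
    also have "\<dots> = (\<Sum>x\<in>UNIV. \<Sum>y\<in>UNIV. \<Sum>z\<in>UNIV. F0 x y z * - (x^(CARD('a) - 1 - a)) * - (y^(CARD('a) - 1 - b)) * - (z^(CARD('a) - 1 - e)))"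
      using that by (simp add: f_def Ew_def)
    also have "\<dots> = - (\<Sum>x\<in>UNIV. \<Sum>y\<in>UNIV. \<Sum>z\<in>UNIV. F0 x y z * x^(CARD('a) - 1 - a) * y^(CARD('a) - 1 - b) * z^(CARD('a) - 1 - e))"
      by (rule neg3)
    finally show ?thesis .
  qed
  have top: "c (CARD('a) - 2) (CARD('a) - 2) (CARD('a) - 2) \<noteq> 0"
  proof -
    have e1: "CARD('a) - 1 - (CARD('a) - 2) = 1" using q9 by simp
    have "c (CARD('a) - 2) (CARD('a) - 2) (CARD('a) - 2) = - (\<Sum>x\<in>UNIV. \<Sum>y\<in>UNIV. \<Sum>z\<in>UNIV. F0 x y z * x * y * z)"
      using coef[of "CARD('a) - 2" "CARD('a) - 2" "CARD('a) - 2"] q9 by (simp add: e1)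
    also have "\<dots> = -1" by (simp add: S111[OF card3 cardgt])
    finally show ?thesis by simp
  qed
  have bound: "i + j + k \<le> 3 * (CARD('a) - 2)" if nz: "c i j k \<noteq> 0" for i j k
  proof (rule ccontr)
    assume "\<not> ?thesis"
    then have big: "i + j + k > 3 * (CARD('a) - 2)" by simp
    have lt: "i < CARD('a)" "j < CARD('a)" "k < CARD('a)" using rep nz unfolding is_reduced_rep_def by blast+
    have ge: "1 \<le> i" "1 \<le> j" "1 \<le> k" using big lt q9 by linarith+
    define \<alpha> where "\<alpha> = CARD('a) - 1 - i"
    define \<beta> where "\<beta> = CARD('a) - 1 - j"
    define \<gamma> where "\<gamma> = CARD('a) - 1 - k"
    have "\<alpha> = 0 \<or> \<beta> = 0 \<or> \<gamma> = 0" using big lt q9 unfolding \<alpha>_def \<beta>_def \<gamma>_def by linarith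
    moreover have "\<alpha> < CARD('a) - 1" "\<beta> < CARD('a) - 1" using ge lt unfolding \<alpha>_def \<beta>_def by linarith+
    ultimately have "(\<Sum>x\<in>UNIV. \<Sum>y\<in>UNIV. \<Sum>z\<in>UNIV. F0 x y z * x^\<alpha> * y^\<beta> * z^\<gamma>) = (0::'a)"
      using VAN[OF card3 cardgt] by blast
    then have "c i j k = 0" using coef[of i j k] ge lt unfolding \<alpha>_def \<beta>_def \<gamma>_def by simp
    then show False using nz by simp
  qed
  have fin: "finite {i + j + k | i j k. c i j k \<noteq> 0}"
  proof (rule finite_subset)
    show "{i + j + k | i j k. c i j k \<noteq> 0} \<subseteq> {..3 * (CARD('a) - 2)}" using bound by auto
  qed simp
  have "Max {i + j + k | i j k. c i j k \<noteq> 0} = 3 * (CARD('a) - 2)"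
  proof (rule Max_eqI[OF fin])
    show "y \<le> 3 * (CARD('a) - 2)" if "y \<in> {i + j + k | i j k. c i j k \<noteq> 0}" for y
      using that bound by auto
    show "3 * (CARD('a) - 2) \<in> {i + j + k | i j k. c i j k \<noteq> 0}"
      using top by (intro CollectI exI[of _ "CARD('a) - 2"]) auto
  qed
  then show ?thesis unfolding fe reduced_degree_def c_def .
qed


end
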